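(* Let $K$ be a totally ordered quasi-field of characteristic $1$, $a\in K$, $n\ge 1$. Let $E=K+KX+\dots+KX^{n-1}\subset K[X]$ and let $\varphi:K[X]\to E$ be the $K$-linear map (additive and compatible with multiplication by scalars) defined on monomials by $\varphi(X^m)=a^qX^r$ where $m=nq+r$ with $0\le r<n$. Then a polynomial $P\in K[X]$ is $*$-singular for $\varphi$ if and only if $P$ belongs to the ideal $J$ of $K[X]$ generated by the polynomials $X^{nk}+a^k$, $k\ge1$.
   Context: A quasi-field of characteristic $1$ is a commutative semiring $K$ with $1+1=1$ in which every nonzero element is multiplicatively invertible; it is ordered by $u\le v$ iff $u+v=v$, totally ordered meaning the order is total. A polynomial $P\in K[X]$ is $*$-singular for $\varphi$ if one can write $P=P_1+P_2$ with $P_1,P_2$ having disjoint sets of monomials and $\varphi(P_1)=\varphi(P_2)$. *)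

theory Defs
  imports "HOL-Computational_Algebra.Polynomial"
begin

definition quasi_field_char1 :: "'a::comm_semiring_1 itself \<Rightarrow> bool" where
  "quasi_field_char1 _ \<longleftrightarrow> (1::'a) + 1 = 1 \<and> (\<forall>x::'a. x \<noteq> 0 \<longrightarrow> (\<exists>y. x * y = 1))"

text \<open>The order u \<le> v iff u + v = v is total.\<close>
definition totally_ordered_char1 :: "'a::comm_semiring_1 itself \<Rightarrow> bool" where
  "totally_ordered_char1 _ \<longleftrightarrow> (\<forall>u v::'a. u + v = v \<or> v + u = u)"

definition monomials :: "'a::zero poly \<Rightarrow> nat set" where
  "monomials P = {m. coeff P m \<noteq> 0}"

definition phi :: "'a::comm_semiring_1 \<Rightarrow> nat \<Rightarrow> 'a poly \<Rightarrow> 'a poly" where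
  "phi a n P = (\<Sum>m\<le>degree P. monom (coeff P m * a ^ (m div n)) (m mod n))"

definition star_singular :: "('a::comm_semiring_1 poly \<Rightarrow> 'a poly) \<Rightarrow> 'a poly \<Rightarrow> bool" where
  "star_singular f P \<longleftrightarrow> (\<exists>P1 P2. P = P1 + P2 \<and> monomials P1 \<inter> monomials P2 = {} \<and> f P1 = f P2)"

definition ideal_gen :: "'a::comm_semiring_1 set \<Rightarrow> 'a set" where
  "ideal_gen S = {p. \<exists>F Q. finite F \<and> F \<subseteq> S \<and> p = (\<Sum>g\<in>F. Q g * g)}"

end

theory Submission imports Defs begin

definition lq :: "'a::plus \<Rightarrow> 'a \<Rightarrow> bool" where "lq x y \<longleftrightarrow> x + y = y"

locale qf1 =
  fixes T :: "'a::comm_semiring_1 itself"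
  assumes qf: "quasi_field_char1 T" and tot: "totally_ordered_char1 T"
begin

lemma one_one: "(1::'a) + 1 = 1" using qf unfolding quasi_field_char1_def by blast

lemma inv_ex: "(x::'a) \<noteq> 0 \<Longrightarrow> \<exists>y. x * y = 1" using qf unfolding quasi_field_char1_def by blast

lemma idem: "(x::'a) + x = x"
proof -
  have "x + x = x * 1 + x * 1" by simp
  also have "\<dots> = x * (1 + 1)" by (simp only: distrib_left)
  also have "\<dots> = x" by (simp only: one_one mult_1_right)
  finally show ?thesis .
qed

lemma sum2: "(x::'a) + y = x \<or> x + y = y"
  using tot unfolding totally_ordered_char1_def by (metis add.commute)

lemma lq_refl: "lq (x::'a) x" by (simp add: lq_def idem)
lemma lq_antisym: "lq (x::'a) y \<Longrightarrow> lq y x \<Longrightarrow> x = y" by (simp add: lq_def add.commute)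
lemma lq_trans: "lq (x::'a) y \<Longrightarrow> lq y z \<Longrightarrow> lq x z"
  unfolding lq_def by (metis add.assoc)
lemma lq_add1: "lq (x::'a) (x + y)" unfolding lq_def by (metis add.assoc idem)
lemma lq_add2: "lq (y::'a) (x + y)" unfolding lq_def by (metis add.commute lq_add1 lq_def)
lemma add_lq: "lq (x::'a) z \<Longrightarrow> lq y z \<Longrightarrow> lq (x + y) z" unfolding lq_def by (metis add.assoc)
lemma lq_zero: "lq (x::'a) 0 \<Longrightarrow> x = 0" by (simp add: lq_def)
lemma zero_lq: "lq 0 (x::'a)" by (simp add: lq_def)
lemma lq_total: "lq (x::'a) y \<or> lq y x" unfolding lq_def by (metis add.commute sum2)
lemma lq_mult: "lq (x::'a) y \<Longrightarrow> lq (x * z) (y * z)" unfolding lq_def by (metis distrib_right)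

lemma no_zd: "(x::'a) \<noteq> 0 \<Longrightarrow> y \<noteq> 0 \<Longrightarrow> x * y \<noteq> 0"
  by (metis inv_ex mult.assoc mult.commute mult_1_left mult_zero_left mult_zero_right)

lemma pow_nz: "(x::'a) \<noteq> 0 \<Longrightarrow> x ^ k \<noteq> 0"
  by (induction k) (auto simp: no_zd)

lemma lq_cancel: "(z::'a) \<noteq> 0 \<Longrightarrow> lq (x * z) (y * z) \<Longrightarrow> lq x y"
proof -
  assume z: "z \<noteq> 0" and h: "lq (x * z) (y * z)"
  obtain w where w: "z * w = 1" using inv_ex[OF z] by blast
  have "lq (x * z * w) (y * z * w)" using lq_mult[OF h] .
  thus ?thesis using w by (simp add: mult.assoc)
qed

lemma sum_lq: "finite S \<Longrightarrow> (\<And>i. i \<in> S \<Longrightarrow> lq (f i) (M::'a)) \<Longrightarrow> lq (sum f S) M"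
  by (induction S rule: finite_induct) (auto simp: zero_lq add_lq)

lemma lq_sum: "finite S \<Longrightarrow> i \<in> S \<Longrightarrow> lq ((f i)::'a) (sum f S)"
proof (induction S rule: finite_induct)
  case (insert x F)
  then show ?case using lq_add1 lq_add2 lq_trans by (auto simp: lq_refl)
qed simp

lemma sum_attained: "finite S \<Longrightarrow> sum f S = (0::'a) \<or> (\<exists>i\<in>S. sum f S = f i)"
proof (induction S rule: finite_induct)
  case (insert x F)
  then show ?case using sum2[of "f x" "sum f F"] by auto
qed simp

lemma maximizer: "finite S \<Longrightarrow> S \<noteq> {} \<Longrightarrow> \<exists>x\<in>S. \<forall>y\<in>S. lq ((f y)::'a) (f x)"
proof (induction S rule: finite_ne_induct)
  case (singleton x) then show ?case by (simp add: lq_refl)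
next
  case (insert x F)
  then obtain z where z: "z \<in> F" "\<forall>y\<in>F. lq (f y) (f z)" by blast
  show ?case
  proof (cases "lq (f x) (f z)")
    case True then show ?thesis using z by (auto simp: lq_refl)
  next
    case False
    hence "lq (f z) (f x)" using lq_total by blast
    then show ?thesis using z lq_trans by (auto simp: lq_refl) 
  qed
qed

end

lemma coeff_phi:
  assumes "degree Q \<le> N"
  shows "coeff (phi a n Q) r = (\<Sum>i\<le>N. if i mod n = r then coeff Q i * a ^ (i div n) else 0)"
proof -
  have "coeff (phi a n Q) r = (\<Sum>i\<le>degree Q. if i mod n = r then coeff Q i * a ^ (i div n) else 0)"
    unfolding phi_def coeff_sum coeff_monom by (intro sum.cong) auto
  also have "\<dots> = (\<Sum>i\<le>N. if i mod n = r then coeff Q i * a ^ (i div n) else 0)"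
    by (rule sum.mono_neutral_left) (use assms in \<open>auto simp: coeff_eq_0\<close>)
  finally show ?thesis .
qed

lemma ideal_gen_zero: "0 \<in> ideal_gen S"
  unfolding ideal_gen_def by (rule CollectI, rule exI[of _ "{}"]) auto

lemma ideal_gen_add:
  assumes "p \<in> ideal_gen S" "q \<in> ideal_gen S"
  shows "p + q \<in> ideal_gen S"
proof -
  obtain F1 Q1 where 1: "finite F1" "F1 \<subseteq> S" "p = (\<Sum>g\<in>F1. Q1 g * g)" using assms(1) unfolding ideal_gen_def by auto
  obtain F2 Q2 where 2: "finite F2" "F2 \<subseteq> S" "q = (\<Sum>g\<in>F2. Q2 g * g)" using assms(2) unfolding ideal_gen_def by auto
  define A1 where "A1 g = (if g \<in> F1 then Q1 g else 0)" for g
  define A2 where "A2 g = (if g \<in> F2 then Q2 g else 0)" for g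
  have e: "(\<Sum>g\<in>F1 \<union> F2. (A1 g + A2 g) * g) = (\<Sum>g\<in>F1 \<union> F2. A1 g * g) + (\<Sum>g\<in>F1 \<union> F2. A2 g * g)"
    by (simp only: distrib_right sum.distrib)
  have f1: "(\<Sum>g\<in>F1 \<union> F2. A1 g * g) = (\<Sum>g\<in>F1. Q1 g * g)"
    by (rule sum.mono_neutral_cong_right) (use 1 2 in \<open>auto simp: A1_def\<close>)
  have f2: "(\<Sum>g\<in>F1 \<union> F2. A2 g * g) = (\<Sum>g\<in>F2. Q2 g * g)"
    by (rule sum.mono_neutral_cong_right) (use 1 2 in \<open>auto simp: A2_def\<close>)
  have "p + q = (\<Sum>g\<in>F1 \<union> F2. (A1 g + A2 g) * g)" using e f1 f2 1(3) 2(3) by simp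
  moreover have "finite (F1 \<union> F2)" "F1 \<union> F2 \<subseteq> S" using 1 2 by auto
  ultimately show ?thesis unfolding ideal_gen_def
    by (intro CollectI exI[of _ "F1 \<union> F2"] exI[of _ "\<lambda>g. A1 g + A2 g"]) simp
qed

lemma ideal_gen_sum: "finite A \<Longrightarrow> (\<And>x. x \<in> A \<Longrightarrow> f x \<in> ideal_gen S) \<Longrightarrow> sum f A \<in> ideal_gen S"
  by (induction A rule: finite_induct) (auto simp: ideal_gen_zero ideal_gen_add)
lemma ideal_gen_base: "g \<in> S \<Longrightarrow> c * g \<in> ideal_gen S"
  unfolding ideal_gen_def by (rule CollectI, rule exI[of _ "{g}"], rule exI[of _ "\<lambda>_. c"]) auto

lemma gen_prod: "monom (b::'a::comm_semiring_1) j * (monom 1 (n * k) + [:a ^ k:]) = monom b (j + n * k) + monom (b * a ^ k) j"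
proof -
  have 1: "monom b j * monom 1 (n * k) = monom b (j + n * k)" by (simp add: mult_monom)
  have 2: "monom b j * [:a ^ k:] = monom (b * a ^ k) j"
  proof -
    have "[:a ^ k:] = monom (a ^ k) 0" by (simp add: monom_0)
    then show ?thesis by (simp only: mult_monom add_0_right)
  qed
  show ?thesis by (simp only: distrib_left 1 2)
qed


definition Cnd :: "'a::comm_semiring_1 \<Rightarrow> nat \<Rightarrow> 'a poly \<Rightarrow> bool" where
"Cnd a n P \<longleftrightarrow> (\<forall>m. coeff P m * a^(m div n) \<noteq> 0 \<longrightarrow> (\<exists>m'. m' \<noteq> m \<and> m' mod n = m mod n \<and>
    lq (coeff P m * a^(m div n)) (coeff P m' * a^(m' div n))))"

context qf1 begin

lemma Cnd_zero: "Cnd a n (0::'a poly)" by (simp add: Cnd_def)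

lemma Cnd_add:
  assumes "Cnd a n (P::'a poly)" "Cnd a n R"
  shows "Cnd a n (P + R)"
  unfolding Cnd_def
proof (intro allI impI)
  fix m
  assume nz: "coeff (P + R) m * a ^ (m div n) \<noteq> 0"
  have e: "coeff (P + R) i * a ^ (i div n) = coeff P i * a ^ (i div n) + coeff R i * a ^ (i div n)" for i
    by (simp add: distrib_right)
  show "\<exists>m'. m' \<noteq> m \<and> m' mod n = m mod n \<and>
        lq (coeff (P + R) m * a ^ (m div n)) (coeff (P + R) m' * a ^ (m' div n))"
  proof (cases "coeff (P + R) m * a ^ (m div n) = coeff P m * a ^ (m div n)")
    case True
    with nz obtain m' where m': "m' \<noteq> m" "m' mod n = m mod n"
      "lq (coeff P m * a^(m div n)) (coeff P m' * a^(m' div n))"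
      using assms(1) unfolding Cnd_def by metis
    have "lq (coeff P m' * a^(m' div n)) (coeff (P + R) m' * a ^ (m' div n))"
      unfolding e by (rule lq_add1)
    then show ?thesis using m' True lq_trans by metis
  next
    case False
    hence T: "coeff (P + R) m * a ^ (m div n) = coeff R m * a ^ (m div n)" using sum2 e by metis
    with nz obtain m' where m': "m' \<noteq> m" "m' mod n = m mod n"
      "lq (coeff R m * a^(m div n)) (coeff R m' * a^(m' div n))"
      using assms(2) unfolding Cnd_def by metis
    have "lq (coeff R m' * a^(m' div n)) (coeff (P + R) m' * a ^ (m' div n))"
      unfolding e by (rule lq_add2)
    then show ?thesis using m' T lq_trans by metis
  qed
qed

lemma Cnd_sum: "finite A \<Longrightarrow> (\<And>x. x \<in> A \<Longrightarrow> Cnd a n ((f x)::'a poly)) \<Longrightarrow> Cnd a n (sum f A)"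
  by (induction A rule: finite_induct) (auto simp: Cnd_zero Cnd_add)

lemma Cnd_gen:
  assumes n: "n \<ge> 1" and k: "k \<ge> 1"
  shows "Cnd a n (monom (b::'a) j * (monom 1 (n * k) + [:a ^ k:]))"
  unfolding gen_prod Cnd_def
proof (intro allI impI)
  fix m
  assume nz: "coeff (monom b (j + n * k) + monom (b * a ^ k) j) m * a ^ (m div n) \<noteq> 0"
  have ne: "j + n * k \<noteq> j" using n k by simp
  have dv: "(j + n * k) div n = j div n + k" using n by simp
  have md: "(j + n * k) mod n = j mod n" using n by simp
  have v1: "coeff (monom b (j + n * k) + monom (b * a ^ k) j) (j + n * k) * a ^ ((j + n * k) div n) = b * a ^ (j div n + k)"
    using ne by (simp add: dv)
  have v2: "coeff (monom b (j + n * k) + monom (b * a ^ k) j) j * a ^ (j div n) = b * a ^ (j div n + k)"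
    using ne by (simp add: power_add mult_ac)
  have "m = j + n * k \<or> m = j" using nz by (auto simp: coeff_monom split: if_splits)
  then show "\<exists>m'. m' \<noteq> m \<and> m' mod n = m mod n \<and>
     lq (coeff (monom b (j + n * k) + monom (b * a ^ k) j) m * a ^ (m div n))
        (coeff (monom b (j + n * k) + monom (b * a ^ k) j) m' * a ^ (m' div n))"
  proof
    assume "m = j + n * k"
    then show ?thesis using ne md v1 v2 lq_refl by (intro exI[of _ j]) auto
  next
    assume "m = j"
    then show ?thesis using ne md v1 v2 lq_refl by (intro exI[of _ "j + n * k"]) auto
  qed
qed

lemma Cnd_mult_gen:
  assumes n: "n \<ge> 1" and k: "k \<ge> 1"
  shows "Cnd a n ((Q::'a poly) * (monom 1 (n * k) + [:a ^ k:]))"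
proof -
  have "Q * (monom 1 (n * k) + [:a ^ k:]) = (\<Sum>i\<le>degree Q. monom (coeff Q i) i * (monom 1 (n * k) + [:a ^ k:]))"
    by (subst (1) poly_as_sum_of_monoms[symmetric]) (simp add: sum_distrib_right)
  then show ?thesis by (simp only:) (rule Cnd_sum, auto intro: Cnd_gen[OF n k])
qed

lemma J_Cnd:
  assumes n: "n \<ge> 1" and P: "(P::'a poly) \<in> ideal_gen {monom 1 (n * k) + [:a ^ k:] | k. k \<ge> 1}"
  shows "Cnd a n P"
proof -
  obtain F Q where F: "finite F" "F \<subseteq> {monom 1 (n * k) + [:a ^ k:] | k. k \<ge> 1}" "P = (\<Sum>g\<in>F. Q g * g)"
    using P unfolding ideal_gen_def by blast
  show ?thesis unfolding F(3)
  proof (rule Cnd_sum[OF F(1)])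
    fix g assume "g \<in> F"
    then obtain k where "k \<ge> 1" "g = monom 1 (n * k) + [:a ^ k:]" using F(2) by blast
    then show "Cnd a n (Q g * g)" using Cnd_mult_gen[OF n] by simp
  qed
qed

end

context qf1 begin

lemma sing_aux:
  fixes P P1 P2 :: "'a poly"
  assumes P: "P = P1 + P2" and dis: "\<forall>i. coeff P1 i = 0 \<or> coeff P2 i = 0"
    and ph: "phi a n P1 = phi a n P2" and nz: "coeff P1 m * a^(m div n) \<noteq> 0" and z: "coeff P2 m = 0"
  shows "\<exists>m'. m' \<noteq> m \<and> m' mod n = m mod n \<and> lq (coeff P m * a^(m div n)) (coeff P m' * a^(m' div n))"
proof -
  define N where "N = degree P1 + degree P2"
  define r where "r = m mod n"
  define f1 where "f1 i = (if i mod n = r then coeff P1 i * a ^ (i div n) else 0)" for i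
  define f2 where "f2 i = (if i mod n = r then coeff P2 i * a ^ (i div n) else 0)" for i
  have s1: "coeff (phi a n P1) r = sum f1 {..N}" unfolding f1_def by (rule coeff_phi) (simp add: N_def)
  have s2: "coeff (phi a n P2) r = sum f2 {..N}" unfolding f2_def by (rule coeff_phi) (simp add: N_def)
  have "coeff P1 m \<noteq> 0" using nz by auto
  hence "m \<le> degree P1" by (rule le_degree)
  hence mN: "m \<in> {..N}" by (simp add: N_def)
  have "lq (f1 m) (sum f1 {..N})" by (rule lq_sum[OF _ mN]) simp
  hence l: "lq (coeff P1 m * a^(m div n)) (sum f2 {..N})" using s1 s2 ph by (simp add: f1_def r_def)
  hence "sum f2 {..N} \<noteq> 0" using nz lq_zero by metis
  then obtain i where i: "i \<in> {..N}" "sum f2 {..N} = f2 i" using sum_attained[of "{..N}" f2] by auto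
  have fi: "f2 i \<noteq> 0" using i \<open>sum f2 {..N} \<noteq> 0\<close> by simp
  hence im: "i mod n = r" and ci: "coeff P2 i \<noteq> 0" unfolding f2_def by (auto split: if_splits)
  have "i \<noteq> m" using ci z by auto
  moreover have "coeff P i = coeff P2 i" using dis ci P by (metis add_0 coeff_add)
  moreover have "coeff P m = coeff P1 m" using z P by auto
  ultimately show ?thesis using l i im unfolding f2_def r_def by (intro exI[of _ i]) auto
qed

lemma sing_Cnd:
  assumes "star_singular (phi a n) (P::'a poly)"
  shows "Cnd a n P"
proof -
  obtain P1 P2 where P: "P = P1 + P2" "monomials P1 \<inter> monomials P2 = {}" "phi a n P1 = phi a n P2"
    using assms unfolding star_singular_def by blast
  have dis: "\<forall>i. coeff P1 i = 0 \<or> coeff P2 i = 0" using P(2) unfolding monomials_def by blast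
  have dis': "\<forall>i. coeff P2 i = 0 \<or> coeff P1 i = 0" using dis by blast
  show ?thesis unfolding Cnd_def
  proof (intro allI impI)
    fix m assume nz: "coeff P m * a ^ (m div n) \<noteq> 0"
    show "\<exists>m'. m' \<noteq> m \<and> m' mod n = m mod n \<and> lq (coeff P m * a ^ (m div n)) (coeff P m' * a ^ (m' div n))"
    proof (cases "coeff P2 m = 0")
      case True
      then show ?thesis using sing_aux[OF P(1) dis P(3) _ True] nz P(1) by simp
    next
      case False
      hence "coeff P1 m = 0" using dis by blast
      then show ?thesis using sing_aux[of P P2 P1, OF _ dis' P(3)[symmetric] _ \<open>coeff P1 m = 0\<close>] nz P(1)
        by (simp add: add.commute)
    qed
  qed
qed

end

context qf1 begin

lemma coeff_two_lq:
  assumes "p \<noteq> s" "lq x (coeff (P::'a poly) p)" "lq y (coeff P s)"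
  shows "lq (coeff (monom x p + monom y s) j) (coeff P j)"
  using assms by (auto simp: coeff_monom zero_lq)

lemma elem:
  fixes P :: "'a poly"
  assumes n: "n \<ge> 1" and C: "Cnd a n P"
  shows "\<exists>E. E \<in> ideal_gen {monom 1 (n * k) + [:a ^ k:] | k. k \<ge> 1} \<and> coeff E m = coeff P m \<and>
             (\<forall>j. lq (coeff E j) (coeff P j))"
proof (cases "coeff P m = 0")
  case True
  then show ?thesis by (intro exI[of _ 0]) (auto simp: ideal_gen_zero zero_lq)
next
  case False
  define c where "c = coeff P m"
  have c: "c \<noteq> 0" using False c_def by simp
  let ?J = "ideal_gen {monom 1 (n * k) + [:a ^ k:] | k. k \<ge> 1}"
  have inJ: "monom b j * (monom 1 (n * k) + [:a ^ k:]) \<in> ?J" if "k \<ge> 1" for b j k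
    by (rule ideal_gen_base) (use that in blast)
  show ?thesis
  proof (cases "a = 0")
    case True
    have mn: "\<not> m < n"
    proof
      assume "m < n"
      hence "coeff P m * a ^ (m div n) = c" by (simp add: c_def)
      with c C obtain m' where m': "m' \<noteq> m" "m' mod n = m mod n" "lq c (coeff P m' * a ^ (m' div n))"
        unfolding Cnd_def by metis
      have "m' div n \<noteq> 0"
      proof
        assume "m' div n = 0"
        hence "m' = m' mod n" using div_mult_mod_eq[of m' n] by simp
        also have "\<dots> = m" using m'(2) \<open>m < n\<close> by simp
        finally show False using m'(1) by simp
      qed
      hence "coeff P m' * a ^ (m' div n) = 0" using True by (simp add: zero_power)
      then show False using m'(3) c lq_zero by simp
    qed
    define E where "E = monom c (m - n) * (monom 1 (n * 1) + [:a ^ 1:])"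
    have "E = monom c m" unfolding E_def gen_prod using mn True by simp
    moreover have "E \<in> ?J" unfolding E_def by (rule inJ) simp
    ultimately show ?thesis by (intro exI[of _ E]) (auto simp: coeff_monom c_def lq_refl zero_lq)
  next
    case False
    have vnz: "coeff P m * a ^ (m div n) \<noteq> 0" using c False by (simp add: c_def no_zd pow_nz)
    with C obtain m' where m': "m' \<noteq> m" "m' mod n = m mod n"
      "lq (c * a ^ (m div n)) (coeff P m' * a ^ (m' div n))"
      unfolding Cnd_def c_def by metis
    define q where "q = m div n"
    define q' where "q' = m' div n"
    define c' where "c' = coeff P m'"
    have mq: "m = n * q + m mod n" by (simp add: q_def)
    have mq': "m' = n * q' + m mod n" unfolding q'_def m'(2)[symmetric] by simp
    have qq: "q \<noteq> q'" using mq mq' m'(1) by metis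
    have l: "lq (c * a ^ q) (c' * a ^ q')" using m'(3) by (simp add: q_def q'_def c'_def)
    show ?thesis
    proof (cases "q < q'")
      case True
      define k where "k = q' - q"
      have k: "k \<ge> 1" using True by (simp add: k_def)
      have m'e: "m' = m + n * k" using mq mq' True by (simp add: k_def algebra_simps)
      obtain ai where ai: "a ^ k * ai = 1" using inv_ex pow_nz False by blast
      define b where "b = c * ai"
      define E where "E = monom b m * (monom 1 (n * k) + [:a ^ k:])"
      have bk: "b * a ^ k = c * (a ^ k * ai)" by (simp add: b_def mult_ac)
      have Ee: "E = monom b m' + monom c m" unfolding E_def gen_prod m'e bk ai by simp
      have "q' = q + k" using True by (simp add: k_def)
      hence "c' * a ^ q' = (c' * a ^ k) * a ^ q" by (simp add: power_add mult_ac)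
      hence "lq ((c) * a ^ q) ((c' * a ^ k) * a ^ q)" using l by simp
      hence "lq c (c' * a ^ k)" using lq_cancel pow_nz False by blast
      hence "lq (c * ai) (c' * a ^ k * ai)" by (rule lq_mult)
      hence lb: "lq b c'" using ai by (simp add: b_def mult.assoc)
      have "coeff E m = coeff P m" unfolding Ee using m'(1) by (simp add: c_def)
      moreover have "\<forall>j. lq (coeff E j) (coeff P j)" unfolding Ee
        using coeff_two_lq[OF m'(1)] lb lq_refl by (simp add: c_def c'_def)
      moreover have "E \<in> ?J" unfolding E_def by (rule inJ[OF k])
      ultimately show ?thesis by blast
    next
      case False
      hence lt: "q' < q" using qq by simp
      define k where "k = q - q'"
      have k: "k \<ge> 1" using lt by (simp add: k_def)
      have "n * q = n * q' + n * k" using lt by (simp add: k_def flip: distrib_left)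
      hence me: "m = m' + n * k" using mq mq' by linarith
      define E where "E = monom c m' * (monom 1 (n * k) + [:a ^ k:])"
      have Ee: "E = monom c m + monom (c * a ^ k) m'" unfolding E_def gen_prod me by simp
      have "q = q' + k" using lt by (simp add: k_def)
      hence "c * a ^ q = (c * a ^ k) * a ^ q'" by (simp add: power_add mult_ac)
      hence "lq ((c * a ^ k) * a ^ q') (c' * a ^ q')" using l by simp
      hence lb: "lq (c * a ^ k) c'" using lq_cancel pow_nz \<open>a \<noteq> 0\<close> by blast
      have "coeff E m = coeff P m" unfolding Ee using m'(1) by (simp add: c_def)
      moreover have "\<forall>j. lq (coeff E j) (coeff P j)" unfolding Ee
        using coeff_two_lq[OF m'(1)[symmetric]] lb lq_refl by (simp add: c_def c'_def)
      moreover have "E \<in> ?J" unfolding E_def by (rule inJ[OF k])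
      ultimately show ?thesis by blast
    qed
  qed
qed

lemma Cnd_J:
  fixes P :: "'a poly"
  assumes n: "n \<ge> 1" and C: "Cnd a n P"
  shows "P \<in> ideal_gen {monom 1 (n * k) + [:a ^ k:] | k. k \<ge> 1}"
proof -
  let ?J = "ideal_gen {monom 1 (n * k) + [:a ^ k:] | k. k \<ge> 1}"
  define E where "E m = (SOME E. E \<in> ?J \<and> coeff E m = coeff P m \<and> (\<forall>j. lq (coeff E j) (coeff P j)))" for m
  have E: "E m \<in> ?J \<and> coeff (E m) m = coeff P m \<and> (\<forall>j. lq (coeff (E m) j) (coeff P j))" for m
    unfolding E_def by (rule someI_ex) (rule elem[OF n C])
  have "P = (\<Sum>m\<le>degree P. E m)"
  proof (rule poly_eqI)
    fix j
    have c: "coeff (\<Sum>m\<le>degree P. E m) j = (\<Sum>m\<le>degree P. coeff (E m) j)" by (simp add: coeff_sum)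
    have 1: "lq (\<Sum>m\<le>degree P. coeff (E m) j) (coeff P j)" by (rule sum_lq) (use E in auto)
    have 2: "lq (coeff P j) (\<Sum>m\<le>degree P. coeff (E m) j)"
    proof (cases "j \<le> degree P")
      case True
      then show ?thesis using lq_sum[of "{..degree P}" j "\<lambda>m. coeff (E m) j"] E by simp
    next
      case False
      then show ?thesis by (simp add: coeff_eq_0 zero_lq)
    qed
    show "coeff P j = coeff (\<Sum>m\<le>degree P. E m) j" using 1 2 c lq_antisym by metis
  qed
  also have "\<dots> \<in> ?J" by (rule ideal_gen_sum) (use E in auto)
  finally show ?thesis .
qed

end

lemma coeff_sum_monoms: "coeff (\<Sum>i\<le>D. monom (f i) i) j = (if j \<le> D then f j else 0)"
  unfolding coeff_sum coeff_monom by (simp add: sum.delta)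
context qf1 begin
lemma sum_eq_M:
  assumes "finite A" "\<And>i. i \<in> A \<Longrightarrow> lq (f i) (M::'a)" "iw \<in> A" "lq M (f iw)"
  shows "sum f A = M"
proof -
  have 1: "lq (sum f A) M" by (rule sum_lq[OF assms(1) assms(2)])
  have "lq (f iw) (sum f A)" by (rule lq_sum[OF assms(1,3)])
  hence "lq M (sum f A)" by (rule lq_trans[OF assms(4)])
  then show ?thesis using 1 by (rule lq_antisym[rotated])
qed

lemma Cnd_sing:
  fixes P :: "'a poly"
  assumes n: "n \<ge> 1" and C: "Cnd a n P"
  shows "star_singular (phi a n) P"
proof -
  define D where "D = degree P"
  define v where "v i = coeff P i * a ^ (i div n)" for i
  define S where "S r = {i. i \<le> D \<and> i mod n = r}" for r
  define \<mu> where "\<mu> r = (SOME x. x \<in> S r \<and> (\<forall>y\<in>S r. lq (v y) (v x)))" for r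
  have fS: "finite (S r)" for r unfolding S_def by simp
  have mu: "\<mu> r \<in> S r \<and> (\<forall>y\<in>S r. lq (v y) (v (\<mu> r)))" if "S r \<noteq> {}" for r
    unfolding \<mu>_def by (rule someI_ex) (use maximizer[OF fS that] in blast)
  define T where "T = {i. i = \<mu> (i mod n)}"
  define P1 where "P1 = (\<Sum>i\<le>D. monom (if i \<in> T then coeff P i else 0) i)"
  define P2 where "P2 = (\<Sum>i\<le>D. monom (if i \<notin> T then coeff P i else 0) i)"
  have c1: "coeff P1 j = (if j \<in> T then coeff P j else 0)" for j
    unfolding P1_def coeff_sum_monoms by (auto simp: D_def coeff_eq_0)
  have c2: "coeff P2 j = (if j \<notin> T then coeff P j else 0)" for j
    unfolding P2_def coeff_sum_monoms by (auto simp: D_def coeff_eq_0)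
  have PP: "P = P1 + P2" by (rule poly_eqI) (simp add: c1 c2)
  have dis: "monomials P1 \<inter> monomials P2 = {}" unfolding monomials_def by (auto simp: c1 c2)
  have d1: "degree P1 \<le> D" by (rule degree_le) (auto simp: c1 D_def coeff_eq_0)
  have d2: "degree P2 \<le> D" by (rule degree_le) (auto simp: c2 D_def coeff_eq_0)
  have ph: "phi a n P1 = phi a n P2"
  proof (rule poly_eqI)
    fix r
    define t1 where "t1 i = (if i mod n = r then coeff P1 i * a ^ (i div n) else 0)" for i
    define t2 where "t2 i = (if i mod n = r then coeff P2 i * a ^ (i div n) else 0)" for i
    have e1: "coeff (phi a n P1) r = sum t1 {..D}" unfolding t1_def by (rule coeff_phi[OF d1])
    have e2: "coeff (phi a n P2) r = sum t2 {..D}" unfolding t2_def by (rule coeff_phi[OF d2])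
    show "coeff (phi a n P1) r = coeff (phi a n P2) r"
    proof (cases "S r = {}")
      case True
      hence "\<forall>i\<in>{..D}. i mod n \<noteq> r" unfolding S_def by auto
      hence "sum t1 {..D} = 0" "sum t2 {..D} = 0" unfolding t1_def t2_def by auto
      then show ?thesis using e1 e2 by simp
    next
      case False
      define M where "M = v (\<mu> r)"
      from mu[OF False] have muS: "\<mu> r \<in> S r" and mx: "\<forall>y\<in>S r. lq (v y) M" by (auto simp: M_def)
      have mur: "\<mu> r mod n = r" "\<mu> r \<le> D" using muS by (auto simp: S_def)
      have muT: "\<mu> r \<in> T" unfolding T_def using mur by simp
      have b1: "lq (t1 i) M" if "i \<in> {..D}" for i
        using that mx unfolding t1_def by (auto simp: c1 zero_lq v_def S_def)
      have b2: "lq (t2 i) M" if "i \<in> {..D}" for i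
        using that mx unfolding t2_def by (auto simp: c2 zero_lq v_def S_def)
      have s1: "sum t1 {..D} = M"
      proof -
        have "coeff P1 (\<mu> r) = coeff P (\<mu> r)" using muT by (simp add: c1)
        hence "t1 (\<mu> r) = M" unfolding t1_def M_def v_def using mur(1) by simp
        then show ?thesis by (intro sum_eq_M[where iw="\<mu> r", OF _ b1]) (simp_all add: lq_refl mur(2))
      qed
      have s2: "sum t2 {..D} = M"
      proof (cases "M = 0")
        case True
        then show ?thesis by (intro sum_eq_M[where iw="\<mu> r", OF _ b2]) (simp_all add: zero_lq mur(2))
      next
        case False
        then obtain m' where m': "m' \<noteq> \<mu> r" "m' mod n = r" "lq M (v m')"
          using C mur unfolding Cnd_def M_def v_def by metis
        have "v m' \<noteq> 0" using m'(3) False lq_zero by metis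
        hence "coeff P m' \<noteq> 0" unfolding v_def by auto
        hence "m' \<le> D" unfolding D_def by (rule le_degree)
        moreover have "m' \<notin> T" unfolding T_def using m' by simp
        ultimately show ?thesis
        proof -
          have "coeff P2 m' = coeff P m'" using \<open>m' \<notin> T\<close> by (simp add: c2)
          hence "t2 m' = v m'" unfolding t2_def v_def using m'(2) by simp
          then show ?thesis using \<open>m' \<le> D\<close> m'(3) by (intro sum_eq_M[where iw=m', OF _ b2]) simp_all
        qed
      qed
      show ?thesis using e1 e2 s1 s2 by simp
    qed
  qed
  show ?thesis unfolding star_singular_def using PP dis ph by (intro exI[of _ P1] exI[of _ P2]) simp
qed

end

theorem lemma3p4:
  fixes a :: "'a::comm_semiring_1" and n :: nat and P :: "'a poly"
  assumes "quasi_field_char1 TYPE('a)"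
    and "totally_ordered_char1 TYPE('a)"
    and "n \<ge> 1"
  shows "star_singular (phi a n) P \<longleftrightarrow>
           P \<in> ideal_gen {monom 1 (n * k) + [:a ^ k:] | k. k \<ge> 1}"
proof -
  interpret qf1 "TYPE('a)" using assms(1,2) by unfold_locales
  show ?thesis using sing_Cnd Cnd_J Cnd_sing J_Cnd assms(3) by blast
qed

end
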